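(* Let $0<c<2$ be arbitrary. Then for some sufficiently large $n$ there exists an $n$-dimensional cooperative, bi-quadratic Boolean network $(\{0,1\}^n,g)$ which has a periodic orbit of length at least $c^n$, and whose associated digraph $D$ is strongly connected.
   Context: An $n$-dimensional Boolean network is a pair $(\Pi,g)$ with $\Pi=\{0,1\}^n$ and $g:\Pi\to\Pi$, with dynamics $s(t+1)=g(s(t))$. A periodic orbit of length $p$ is a set of $p$ distinct states $s,g(s),\dots,g^{p-1}(s)$ with $g^p(s)=s$. The cooperative order on $\Pi$ is $s\le r$ iff $s_i\le r_i$ for all $i$; the network is cooperative if $s\le r$ implies $g(s)\le g(r)$. The associated digraph $D$ has vertex set $\{1,\dots,n\}$, and $\langle i,j\rangle$ is an arc iff there exist states $s,r\in\Pi$ with $s_i<r_i$, $s_k=r_k$ for all $k\ne i$, and $g(s)_j<g(r)_j$. The network is bi-quadratic if every vertex of $D$ has indegree at most $2$ and outdegree at most $2$. *)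

theory Defs
  imports Complex_Main
begin

definition states :: "nat \<Rightarrow> bool list set" where
  "states n = {s. length s = n}"

definition boolean_network :: "nat \<Rightarrow> (bool list \<Rightarrow> bool list) \<Rightarrow> bool" where
  "boolean_network n g \<longleftrightarrow> (\<forall>s\<in>states n. g s \<in> states n)"

definition coop_le :: "bool list \<Rightarrow> bool list \<Rightarrow> bool" where
  "coop_le s r \<longleftrightarrow> length s = length r \<and> (\<forall>i<length s. s ! i \<le> r ! i)"

definition cooperative :: "nat \<Rightarrow> (bool list \<Rightarrow> bool list) \<Rightarrow> bool" where
  "cooperative n g \<longleftrightarrow>
     (\<forall>s\<in>states n. \<forall>r\<in>states n. coop_le s r \<longrightarrow> coop_le (g s) (g r))"

definition arc :: "nat \<Rightarrow> (bool list \<Rightarrow> bool list) \<Rightarrow> nat \<Rightarrow> nat \<Rightarrow> bool" where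
  "arc n g i j \<longleftrightarrow> i < n \<and> j < n \<and>
     (\<exists>s\<in>states n. \<exists>r\<in>states n. s ! i < r ! i \<and> (\<forall>k<n. k \<noteq> i \<longrightarrow> s ! k = r ! k)
        \<and> g s ! j < g r ! j)"

definition indegree :: "nat \<Rightarrow> (bool list \<Rightarrow> bool list) \<Rightarrow> nat \<Rightarrow> nat" where
  "indegree n g j = card {i. arc n g i j}"

definition outdegree :: "nat \<Rightarrow> (bool list \<Rightarrow> bool list) \<Rightarrow> nat \<Rightarrow> nat" where
  "outdegree n g i = card {j. arc n g i j}"

definition bi_quadratic :: "nat \<Rightarrow> (bool list \<Rightarrow> bool list) \<Rightarrow> bool" where
  "bi_quadratic n g \<longleftrightarrow> (\<forall>v<n. indegree n g v \<le> 2 \<and> outdegree n g v \<le> 2)"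

definition strongly_connected :: "nat \<Rightarrow> (bool list \<Rightarrow> bool list) \<Rightarrow> bool" where
  "strongly_connected n g \<longleftrightarrow>
     (\<forall>i<n. \<forall>j<n. (i, j) \<in> {(a, b). arc n g a b}\<^sup>*)"

definition periodic_orbit :: "nat \<Rightarrow> (bool list \<Rightarrow> bool list) \<Rightarrow> bool list \<Rightarrow> nat \<Rightarrow> bool" where
  "periodic_orbit n g s p \<longleftrightarrow> s \<in> states n \<and> p \<ge> 1 \<and> (g ^^ p) s = s \<and>
     inj_on (\<lambda>k. (g ^^ k) s) {0..<p}"

end

theory Submission
  imports Defs
begin


datatype 'v gate = GC 'v | GA 'v 'v | GO 'v 'v

fun gins :: "'v gate \<Rightarrow> 'v list" where
  "gins (GC a) = [a]" | "gins (GA a b) = [a, b]" | "gins (GO a b) = [a, b]"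

fun geval :: "('v \<Rightarrow> bool) \<Rightarrow> 'v gate \<Rightarrow> bool" where
  "geval f (GC a) = f a" | "geval f (GA a b) = (f a \<and> f b)" | "geval f (GO a b) = (f a \<or> f b)"

fun gproper :: "'v gate \<Rightarrow> bool" where
  "gproper (GC a) = True" | "gproper (GA a b) = (a \<noteq> b)" | "gproper (GO a b) = (a \<noteq> b)"

lemma geval_cong: "(\<And>w. w \<in> set (gins x) \<Longrightarrow> f w = h w) \<Longrightarrow> geval f x = geval h x"
  by (cases x) auto

lemma geval_mono: "(\<And>w. w \<in> set (gins x) \<Longrightarrow> f w \<le> h w) \<Longrightarrow> geval f x \<le> geval h x"
  by (cases x) (auto simp: le_bool_def)

locale gnet =
  fixes nodes :: "'v list" and G :: "'v \<Rightarrow> 'v gate"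
  assumes dist: "distinct nodes"
    and closed: "\<And>v w. v \<in> set nodes \<Longrightarrow> w \<in> set (gins (G v)) \<Longrightarrow> w \<in> set nodes"
begin

abbreviation "nn \<equiv> length nodes"

definition ix :: "'v \<Rightarrow> nat" where
  "ix w = (THE i. i < length nodes \<and> nodes ! i = w)"

lemma ix_nth: "i < nn \<Longrightarrow> ix (nodes ! i) = i"
  unfolding ix_def using dist by (auto intro!: the_equality simp: nth_eq_iff_index_eq)

lemma ix_mem: "w \<in> set nodes \<Longrightarrow> ix w < nn \<and> nodes ! ix w = w"
  by (metis in_set_conv_nth ix_nth)

definition net :: "bool list \<Rightarrow> bool list" where
  "net s = map (\<lambda>v. geval (\<lambda>w. s ! ix w) (G v)) nodes"

lemma net_nth: "j < nn \<Longrightarrow> net s ! j = geval (\<lambda>w. s ! ix w) (G (nodes ! j))"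
  by (simp add: net_def)

lemma bn: "boolean_network nn net"
  by (simp add: boolean_network_def states_def net_def)

lemma coop: "cooperative nn net"
  unfolding cooperative_def
proof (intro ballI impI)
  fix s r assume s: "s \<in> states nn" and r: "r \<in> states nn" and le: "coop_le s r"
  show "coop_le (net s) (net r)"
    unfolding coop_le_def
  proof (intro conjI allI impI)
    show "length (net s) = length (net r)" by (simp add: net_def)
    fix j assume j: "j < length (net s)"
    hence j': "j < nn" by (simp add: net_def)
    show "net s ! j \<le> net r ! j" unfolding net_nth[OF j']
    proof (rule geval_mono)
      fix w assume "w \<in> set (gins (G (nodes ! j)))"
      hence "w \<in> set nodes" using closed[OF nth_mem[OF j']] by auto
      hence "ix w < nn" using ix_mem by auto
      thus "s ! ix w \<le> r ! ix w" using le s r by (auto simp: coop_le_def states_def)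
    qed
  qed
qed

lemma arc_imp:
  assumes "arc nn net i j"
  shows "i < nn \<and> j < nn \<and> nodes ! i \<in> set (gins (G (nodes ! j)))"
proof -
  from assms obtain s r where ij: "i < nn" "j < nn" and s: "s \<in> states nn" and r: "r \<in> states nn"
    and eq: "\<forall>k<nn. k \<noteq> i \<longrightarrow> s ! k = r ! k" and lt: "net s ! j < net r ! j"
    unfolding arc_def by blast
  show ?thesis
  proof (rule ccontr)
    assume "\<not> ?thesis"
    hence nin: "nodes ! i \<notin> set (gins (G (nodes ! j)))" using ij by auto
    have "net s ! j = net r ! j" unfolding net_nth[OF ij(2)]
    proof (rule geval_cong)
      fix w assume w: "w \<in> set (gins (G (nodes ! j)))"
      hence wn: "w \<in> set nodes" using closed[OF nth_mem[OF ij(2)]] by auto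
      have "ix w \<noteq> i" using ix_mem[OF wn] nin w by auto
      thus "s ! ix w = r ! ix w" using eq ix_mem[OF wn] by auto
    qed
    thus False using lt by simp
  qed
qed

lemma arc_wit:
  assumes "ix w < nn" "ix v < nn" "length s = nn" "length r = nn"
    "\<And>k. k < nn \<Longrightarrow> k \<noteq> ix w \<Longrightarrow> s ! k = r ! k"
    "s ! ix w < r ! ix w" "net s ! ix v < net r ! ix v"
  shows "arc nn net (ix w) (ix v)"
  unfolding arc_def using assms by (auto simp: states_def)

lemma arc_intro:
  assumes v: "v \<in> set nodes" and w: "w \<in> set (gins (G v))" and pr: "gproper (G v)"
  shows "arc nn net (ix w) (ix v)"
proof -
  have wn: "w \<in> set nodes" using closed v w by auto
  note iv = ix_mem[OF v] and iw = ix_mem[OF wn]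
  show ?thesis
  proof (cases "G v")
    case (GC a)
    hence a: "a = w" using w by simp
    show ?thesis
      apply (rule arc_wit[where s="replicate nn False" and r="(replicate nn False)[ix w := True]"])
      using iv iw GC a by (auto simp: net_nth nth_list_update)
  next
    case (GA a b)
    hence ab: "a \<noteq> b" and wab: "w = a \<or> w = b" using pr w by auto
    have an: "a \<in> set nodes" "b \<in> set nodes" using closed v GA by auto
    have ixab: "ix a \<noteq> ix b" using ix_mem[OF an(1)] ix_mem[OF an(2)] ab by metis
    show ?thesis
      apply (rule arc_wit[where r="replicate nn True" and s="(replicate nn True)[ix w := False]"])
      using iv iw GA wab ixab ix_mem[OF an(1)] ix_mem[OF an(2)]
      by (auto simp: net_nth nth_list_update)
  next
    case (GO a b)
    hence ab: "a \<noteq> b" and wab: "w = a \<or> w = b" using pr w by auto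
    have an: "a \<in> set nodes" "b \<in> set nodes" using closed v GO by auto
    have ixab: "ix a \<noteq> ix b" using ix_mem[OF an(1)] ix_mem[OF an(2)] ab by metis
    show ?thesis
      apply (rule arc_wit[where s="replicate nn False" and r="(replicate nn False)[ix w := True]"])
      using iv iw GO wab ixab ix_mem[OF an(1)] ix_mem[OF an(2)]
      by (auto simp: net_nth nth_list_update)
  qed
qed

lemma indeg: "j < nn \<Longrightarrow> indegree nn net j \<le> 2"
proof -
  assume j: "j < nn"
  have "{i. arc nn net i j} \<subseteq> ix ` set (gins (G (nodes ! j)))"
  proof
    fix i assume "i \<in> {i. arc nn net i j}"
    hence "i < nn" "nodes ! i \<in> set (gins (G (nodes ! j)))" using arc_imp by auto
    thus "i \<in> ix ` set (gins (G (nodes ! j)))" using ix_nth by force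
  qed
  hence "card {i. arc nn net i j} \<le> card (ix ` set (gins (G (nodes ! j))))"
    by (simp add: card_mono)
  also have "\<dots> \<le> card (set (gins (G (nodes ! j))))" by (rule card_image_le) simp
  also have "\<dots> \<le> length (gins (G (nodes ! j)))" by (rule card_length)
  also have "\<dots> \<le> 2" by (cases "G (nodes ! j)") auto
  finally show ?thesis by (simp add: indegree_def)
qed

lemma outdeg:
  assumes cons: "\<And>w. w \<in> set nodes \<Longrightarrow> card {v \<in> set nodes. w \<in> set (gins (G v))} \<le> 2"
  shows "i < nn \<Longrightarrow> outdegree nn net i \<le> 2"
proof -
  assume i: "i < nn"
  have "{j. arc nn net i j} \<subseteq> ix ` {v \<in> set nodes. nodes ! i \<in> set (gins (G v))}"
  proof
    fix j assume "j \<in> {j. arc nn net i j}"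
    hence "j < nn" "nodes ! i \<in> set (gins (G (nodes ! j)))" using arc_imp by auto
    thus "j \<in> ix ` {v \<in> set nodes. nodes ! i \<in> set (gins (G v))}" using ix_nth
      by (metis (mono_tags, lifting) image_eqI mem_Collect_eq nth_mem)
  qed
  hence "card {j. arc nn net i j} \<le> card (ix ` {v \<in> set nodes. nodes ! i \<in> set (gins (G v))})"
    by (simp add: card_mono)
  also have "\<dots> \<le> card {v \<in> set nodes. nodes ! i \<in> set (gins (G v))}" by (rule card_image_le) simp
  also have "\<dots> \<le> 2" using cons i by simp
  finally show ?thesis by (simp add: outdegree_def)
qed

lemma biq:
  assumes cons: "\<And>w. w \<in> set nodes \<Longrightarrow> card {v \<in> set nodes. w \<in> set (gins (G v))} \<le> 2"
  shows "bi_quadratic nn net"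
  using indeg outdeg[OF cons] by (simp add: bi_quadratic_def)

lemma sim:
  assumes "\<And>v. v \<in> set nodes \<Longrightarrow> geval (\<lambda>w. sem w t) (G v) = sem v (Suc t)"
  shows "net (map (\<lambda>v. sem v t) nodes) = map (\<lambda>v. sem v (Suc t)) nodes"
proof (rule nth_equalityI)
  show "length (net (map (\<lambda>v. sem v t) nodes)) = length (map (\<lambda>v. sem v (Suc t)) nodes)"
    by (simp add: net_def)
  fix j assume "j < length (net (map (\<lambda>v. sem v t) nodes))"
  hence j: "j < nn" by (simp add: net_def)
  have "net (map (\<lambda>v. sem v t) nodes) ! j = geval (\<lambda>w. sem w t) (G (nodes ! j))"
    unfolding net_nth[OF j]
    apply (rule geval_cong) using closed[OF nth_mem[OF j]] ix_mem by fastforce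
  also have "\<dots> = sem (nodes ! j) (Suc t)" using assms j by simp
  finally show "net (map (\<lambda>v. sem v t) nodes) ! j = map (\<lambda>v. sem v (Suc t)) nodes ! j"
    using j by simp
qed

definition E :: "(nat \<times> nat) set" where "E = {(a, b). arc nn net a b}"

lemma edge: "v \<in> set nodes \<Longrightarrow> w \<in> set (gins (G v)) \<Longrightarrow> gproper (G v) \<Longrightarrow> (ix w, ix v) \<in> E\<^sup>*"
  using arc_intro by (auto simp: E_def)

lemma sc:
  assumes hub: "hub \<in> set nodes"
    and to: "\<And>v. v \<in> set nodes \<Longrightarrow> (ix v, ix hub) \<in> E\<^sup>*"
    and frm: "\<And>v. v \<in> set nodes \<Longrightarrow> (ix hub, ix v) \<in> E\<^sup>*"
  shows "strongly_connected nn net"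
  unfolding strongly_connected_def
proof (intro allI impI)
  fix i j assume "i < nn" "j < nn"
  hence "(ix (nodes ! i), ix hub) \<in> E\<^sup>*" "(ix hub, ix (nodes ! j)) \<in> E\<^sup>*"
    using to frm by auto
  hence "(i, j) \<in> E\<^sup>*" using ix_nth \<open>i < nn\<close> \<open>j < nn\<close> by (metis rtrancl_trans)
  thus "(i, j) \<in> {(a, b). arc nn net a b}\<^sup>*" by (simp add: E_def)
qed

end


datatype cell = Mk bool | Dg bool nat

fun carry :: "nat \<Rightarrow> cell \<Rightarrow> bool" where
  "carry B (Mk f) = True" | "carry B (Dg f d) = (f \<and> d = B - 1)"

fun Mc :: "nat \<Rightarrow> cell \<Rightarrow> cell \<Rightarrow> cell" where
  "Mc B c1 (Mk f) = Mk (carry B c1)"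
| "Mc B c1 (Dg f d) = Dg (carry B c1) (if f then Suc d mod B else d)"

function Wc :: "nat \<Rightarrow> nat \<Rightarrow> nat \<Rightarrow> cell" where
  "Wc B m j = (if j < m + 2 then (if j mod (Suc m) = 0 then Mk False else Dg False 0)
     else Mc B (Wc B m (j - m - 2)) (Wc B m (j - m - 1)))"
  by auto
termination by (relation "measure (\<lambda>(B,m,j). j)") auto

declare Wc.simps[simp del]

fun isMk :: "cell \<Rightarrow> bool" where "isMk (Mk f) = True" | "isMk (Dg f d) = False"

fun vcell :: "nat \<Rightarrow> cell \<Rightarrow> bool" where
  "vcell B (Mk f) = True" | "vcell B (Dg f d) = (d < B)"

lemma Wc_rec: "m + 2 \<le> j \<Longrightarrow> Wc B m j = Mc B (Wc B m (j - m - 2)) (Wc B m (j - m - 1))"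
  by (subst Wc.simps) auto

lemma isMk_Mc: "isMk (Mc B c1 c2) = isMk c2"
  by (cases c2) auto

lemma Wc_isMk: "isMk (Wc B m j) \<longleftrightarrow> j mod (Suc m) = 0"
proof (induction j rule: less_induct)
  case (less j)
  show ?case
  proof (cases "j < m + 2")
    case True
    thus ?thesis by (subst Wc.simps) auto
  next
    case False
    hence "isMk (Wc B m j) = isMk (Wc B m (j - m - 1))" by (simp add: Wc_rec isMk_Mc)
    also have "\<dots> \<longleftrightarrow> (j - m - 1) mod Suc m = 0" using less False by auto
    also have "\<dots> \<longleftrightarrow> j mod Suc m = 0"
    proof -
      have "j = (j - m - 1) + Suc m" using False by simp
      hence "j mod Suc m = (j - m - 1) mod Suc m" by (metis mod_add_self2)
      thus ?thesis by simp
    qed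
    finally show ?thesis .
  qed
qed

lemma vcell_Mc: "0 < B \<Longrightarrow> vcell B c2 \<Longrightarrow> vcell B (Mc B c1 c2)"
  by (cases c2) auto

lemma Wc_valid: "0 < B \<Longrightarrow> vcell B (Wc B m j)"
proof (induction j rule: less_induct)
  case (less j)
  show ?case
  proof (cases "j < m + 2")
    case True
    thus ?thesis using less by (subst Wc.simps) auto
  next
    case False
    thus ?thesis using less by (simp add: Wc_rec vcell_Mc)
  qed
qed

fun dv :: "cell \<Rightarrow> nat" where
  "dv (Mk f) = 0" | "dv (Dg f d) = d + (if f then 1 else 0)"

definition Val :: "nat \<Rightarrow> nat \<Rightarrow> nat \<Rightarrow> nat" where
  "Val B m \<rho> = (\<Sum>i<m. dv (Wc B m (\<rho> * Suc m + Suc i)) * B ^ i) mod B ^ m"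

lemma telescope:
  assumes "\<And>i. i < m \<Longrightarrow> a i + B * cin (Suc i) = x i"
  shows "(\<Sum>i<m. (a i + cin i) * B ^ i) + cin m * B ^ m = (\<Sum>i<m. x i * B ^ i) + (cin 0::nat)"
  using assms
proof (induction m)
  case 0 thus ?case by simp
next
  case (Suc m)
  have IH: "(\<Sum>i<m. (a i + cin i) * B ^ i) + cin m * B ^ m = (\<Sum>i<m. x i * B ^ i) + cin 0"
    using Suc by auto
  have xm: "a m + B * cin (Suc m) = x m" using Suc by auto
  have "(\<Sum>i<Suc m. (a i + cin i) * B ^ i) + cin (Suc m) * B ^ Suc m
      = (\<Sum>i<m. (a i + cin i) * B ^ i) + cin m * B ^ m + (a m + B * cin (Suc m)) * B ^ m"
    by (simp add: algebra_simps)
  also have "\<dots> = (\<Sum>i<Suc m. x i * B ^ i) + cin 0" using IH xm by simp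
  finally show ?case .
qed

lemma carry_digit: "d < B \<Longrightarrow> (if f then Suc d mod B else d) + B * (if f \<and> d = B - 1 then 1 else 0)
   = d + (if f then 1 else 0)"
proof (cases f)
  case True
  assume d: "d < B"
  show ?thesis
  proof (cases "d = B - 1")
    case True
    hence "Suc d = B" using d by simp
    thus ?thesis using True \<open>f\<close> by simp
  next
    case False
    hence "Suc d < B" using d by simp
    thus ?thesis using False \<open>f\<close> by simp
  qed
qed simp

lemma Val_step:
  assumes B: "0 < B"
  shows "Val B m (Suc \<rho>) = (Val B m \<rho> + 1) mod B ^ m"
proof -
  define x where "x i = Wc B m (\<rho> * Suc m + Suc i)" for i
  define cin where "cin i = (if carry B (Wc B m (\<rho> * Suc m + i)) then 1 else 0::nat)" for i
  have xDg: "\<not> isMk (x i)" if "i < m" for i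
  proof -
    have "(\<rho> * Suc m + Suc i) mod Suc m = Suc i mod Suc m" by (metis mod_mult_self3)
    hence "(\<rho> * Suc m + Suc i) mod Suc m = Suc i" using that by simp
    thus ?thesis using Wc_isMk[of B m] that unfolding x_def by auto
  qed
  have y: "Wc B m (Suc \<rho> * Suc m + Suc i) = Mc B (Wc B m (\<rho> * Suc m + i)) (x i)" for i
  proof -
    have "Wc B m (Suc \<rho> * Suc m + Suc i) = Mc B (Wc B m (Suc \<rho> * Suc m + Suc i - m - 2))
       (Wc B m (Suc \<rho> * Suc m + Suc i - m - 1))" by (rule Wc_rec) simp
    moreover have "Suc \<rho> * Suc m + Suc i - m - 2 = \<rho> * Suc m + i" by simp
    moreover have "Suc \<rho> * Suc m + Suc i - m - 1 = \<rho> * Suc m + Suc i" by simp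
    ultimately show ?thesis by (simp add: x_def ac_simps)
  qed
  define a where "a i = dv (Wc B m (Suc \<rho> * Suc m + Suc i)) - cin i" for i
  have dvy: "dv (Wc B m (Suc \<rho> * Suc m + Suc i)) = a i + cin i" if im: "i < m" for i
  proof -
    obtain f d where xi: "x i = Dg f d" using xDg[OF im] by (cases "x i") auto
    show ?thesis unfolding a_def y xi by (simp add: cin_def)
  qed
  have key: "a i + B * cin (Suc i) = dv (x i)" if im: "i < m" for i
  proof -
    obtain f d where xi: "x i = Dg f d" using xDg[OF im] by (cases "x i") auto
    have d: "d < B" using Wc_valid[OF B, of m "\<rho> * Suc m + Suc i"] xi by (simp add: x_def)
    have "cin (Suc i) = (if f \<and> d = B - 1 then 1 else 0)"
      unfolding cin_def using xi by (simp add: x_def)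
    moreover have "a i = (if f then Suc d mod B else d)"
      unfolding a_def y xi by (simp add: cin_def)
    ultimately show ?thesis using carry_digit[OF d, of f] xi by simp
  qed
  have c0: "cin 0 = 1"
  proof -
    have "isMk (Wc B m (\<rho> * Suc m))" by (subst Wc_isMk) (rule mod_mult_self2_is_0)
    then obtain f where "Wc B m (\<rho> * Suc m) = Mk f" by (cases "Wc B m (\<rho> * Suc m)") simp_all
    thus ?thesis unfolding cin_def by simp
  qed
  have T: "(\<Sum>i<m. (a i + cin i) * B ^ i) + cin m * B ^ m = (\<Sum>i<m. dv (x i) * B ^ i) + 1"
    using telescope[of m a B cin "\<lambda>i. dv (x i)", OF key] unfolding c0 .
  have "Val B m (Suc \<rho>) = (\<Sum>i<m. (a i + cin i) * B ^ i) mod B ^ m"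
    unfolding Val_def using dvy by (intro arg_cong2[where f="(mod)"] sum.cong) auto
  also have "\<dots> = ((\<Sum>i<m. (a i + cin i) * B ^ i) + cin m * B ^ m) mod B ^ m" by simp
  also have "\<dots> = ((\<Sum>i<m. dv (x i) * B ^ i) + 1) mod B ^ m" using T by simp
  also have "\<dots> = (Val B m \<rho> + 1) mod B ^ m" unfolding Val_def x_def by (simp add: mod_Suc_eq)
  finally show ?thesis .
qed

lemma Val_lt: "0 < B \<Longrightarrow> Val B m \<rho> < B ^ m"
  by (simp add: Val_def)

lemma Val_add: "0 < B \<Longrightarrow> Val B m (\<rho> + q) = (Val B m \<rho> + q) mod B ^ m"
proof (induction q)
  case 0 thus ?case using Val_lt by simp
next
  case (Suc q)
  thus ?case using Val_step[of B m "\<rho> + q"] by (simp add: mod_Suc_eq)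
qed

lemma period_bound:
  assumes B: "0 < B" and P: "0 < P" and per: "\<And>j. j0 \<le> j \<Longrightarrow> Wc B m (j + P) = Wc B m j"
  shows "B ^ m \<le> P"
proof -
  have iter: "Wc B m (j + q * P) = Wc B m j" if "j0 \<le> j" for j q
  proof (induction q)
    case 0 thus ?case by simp
  next
    case (Suc q)
    have "Wc B m (j + Suc q * P) = Wc B m ((j + q * P) + P)" by (simp add: algebra_simps)
    also have "\<dots> = Wc B m (j + q * P)" using per that by simp
    finally show ?case using Suc by simp
  qed
  have "Val B m (j0 + P) = Val B m j0"
    unfolding Val_def
  proof (intro arg_cong2[where f="(mod)"] sum.cong refl)
    fix i
    have "(j0 + P) * Suc m + Suc i = (j0 * Suc m + Suc i) + Suc m * P" by (simp add: algebra_simps)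
    moreover have "j0 \<le> j0 * Suc m + Suc i" by simp
    ultimately show "dv (Wc B m ((j0 + P) * Suc m + Suc i)) * B ^ i = dv (Wc B m (j0 * Suc m + Suc i)) * B ^ i"
      using iter by metis
  qed
  hence "(Val B m j0 + P) mod B ^ m = Val B m j0" using Val_add[OF B] by simp
  hence eq: "(Val B m j0 + P mod B ^ m) mod B ^ m = Val B m j0" by (simp add: mod_add_right_eq)
  have "P mod B ^ m = 0"
  proof (rule ccontr)
    assume ne: "P mod B ^ m \<noteq> 0"
    have M: "0 < B ^ m" using B by simp
    have lt: "P mod B ^ m < B ^ m" using M by simp
    have V: "Val B m j0 < B ^ m" using Val_lt[OF B] .
    define V where "V = Val B m j0"
    define r where "r = P mod B ^ m"
    define M where "M = B ^ m"
    have eq': "(V + r) mod M = V" using eq by (simp add: V_def r_def M_def)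
    have ne': "r \<noteq> 0" "r < M" "V < M" using ne lt V by (auto simp: V_def r_def M_def)
    show False
    proof (cases "V + r < M")
      case True
      hence "(V + r) mod M = V + r" by (rule mod_less)
      thus False using eq' ne' by linarith
    next
      case False
      hence "(V + r) mod M = (V + r - M) mod M" by (simp add: le_mod_geq)
      also have "\<dots> = V + r - M" using ne' by (intro mod_less) linarith
      finally show False using eq' ne' False by linarith
    qed
  qed
  thus ?thesis using P by (metis dvd_imp_le mod_0_imp_dvd)
qed



definition wt :: "bool list \<Rightarrow> nat" where "wt w = length (filter id w)"

lemma wt_card: "wt w = card {i. i < length w \<and> w ! i}"
  unfolding wt_def by (simp add: length_filter_conv_card)

lemma wt_simps[simp]: "wt [] = 0" "wt (x # xs) = (if x then Suc (wt xs) else wt xs)"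
  "wt (xs @ ys) = wt xs + wt ys"
  by (auto simp: wt_def)

lemma wt_mono: "length xs = length ys \<Longrightarrow> (\<forall>i<length xs. xs ! i \<longrightarrow> ys ! i) \<Longrightarrow> wt xs \<le> wt ys"
proof (induction xs arbitrary: ys)
  case Nil thus ?case by simp
next
  case (Cons x xs)
  then obtain y ys' where ys: "ys = y # ys'" by (cases ys) auto
  have "\<forall>i<length xs. xs ! i \<longrightarrow> ys' ! i" using Cons.prems ys by force
  hence "wt xs \<le> wt ys'" using Cons ys by simp
  moreover have "x \<longrightarrow> y" using Cons.prems ys by force
  ultimately show ?case using ys by auto
qed

lemma antichain:
  "length xs = length ys \<Longrightarrow> (\<forall>i<length xs. xs ! i \<longrightarrow> ys ! i) \<Longrightarrow> wt xs = wt ys \<Longrightarrow> xs = ys"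
proof (induction xs arbitrary: ys)
  case Nil thus ?case by simp
next
  case (Cons x xs)
  then obtain y ys' where ys: "ys = y # ys'" by (cases ys) auto
  have sub: "\<forall>i<length xs. xs ! i \<longrightarrow> ys' ! i" using Cons.prems ys by force
  have len: "length xs = length ys'" using Cons.prems ys by simp
  have xy: "x \<longrightarrow> y" using Cons.prems ys by force
  have le: "wt xs \<le> wt ys'" using wt_mono[OF len sub] .
  have "x = y"
  proof (rule ccontr)
    assume "x \<noteq> y"
    hence "\<not> x" "y" using xy by auto
    thus False using Cons.prems(3) ys le by simp
  qed
  hence "wt xs = wt ys'" using Cons.prems(3) ys by (cases x) auto
  hence "xs = ys'" using Cons.IH len sub by simp
  thus ?case using ys \<open>x = y\<close> by simp
qed

definition blkset :: "nat \<Rightarrow> bool list set" where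
  "blkset k = {w. length w = 2 * k \<and> wt w = k}"

lemma finite_blkset: "finite (blkset k)"
proof -
  have "blkset k \<subseteq> {w. length w = 2 * k}" by (auto simp: blkset_def)
  thus ?thesis using finite_lists_length_eq[of "UNIV :: bool set"] by (auto intro: finite_subset)
qed

lemma card_blkset: "card (blkset k) = (2 * k) choose k"
proof -
  let ?n = "2 * k"
  define f where "f w = {i. i < ?n \<and> w ! i}" for w :: "bool list"
  have "bij_betw f (blkset k) {S. S \<subseteq> {0..<?n} \<and> card S = k}"
  proof (rule bij_betw_byWitness[where f'="\<lambda>S. map (\<lambda>i. i \<in> S) [0..<?n]"])
    show "\<forall>w\<in>blkset k. map (\<lambda>i. i \<in> f w) [0..<?n] = w"
      by (auto simp: blkset_def f_def intro!: nth_equalityI)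
    show "\<forall>S\<in>{S. S \<subseteq> {0..<?n} \<and> card S = k}. f (map (\<lambda>i. i \<in> S) [0..<?n]) = S"
      by (auto simp: f_def)
    show "f ` blkset k \<subseteq> {S. S \<subseteq> {0..<?n} \<and> card S = k}"
      by (auto simp: f_def blkset_def wt_card)
    show "(\<lambda>S. map (\<lambda>i. i \<in> S) [0..<?n]) ` {S. S \<subseteq> {0..<?n} \<and> card S = k} \<subseteq> blkset k"
    proof
      fix w assume "w \<in> (\<lambda>S. map (\<lambda>i. i \<in> S) [0..<?n]) ` {S. S \<subseteq> {0..<?n} \<and> card S = k}"
      then obtain S where S: "S \<subseteq> {0..<?n}" "card S = k" and w: "w = map (\<lambda>i. i \<in> S) [0..<?n]"
        by auto
      have "{i. i < length w \<and> w ! i} = S" using S w by auto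
      thus "w \<in> blkset k" using S w by (auto simp: blkset_def wt_card)
    qed
  qed
  hence "card (blkset k) = card {S. S \<subseteq> {0..<?n} \<and> card S = k}" by (rule bij_betw_same_card)
  also have "\<dots> = ?n choose k" using n_subsets[of "{0..<?n}" k] by simp
  finally show ?thesis .
qed

definition blks :: "nat \<Rightarrow> bool list list" where
  "blks k = (SOME xs. set xs = blkset k \<and> distinct xs)"

lemma blks: "set (blks k) = blkset k" "distinct (blks k)"
  using someI_ex[OF finite_distinct_list[OF finite_blkset[of k]]] unfolding blks_def by auto

lemma length_blks: "length (blks k) = (2 * k) choose k"
  using blks card_blkset distinct_card by metis

definition Bk :: "nat \<Rightarrow> nat" where "Bk k = length (blks k) - 1"

lemma blks_nth: "i < length (blks k) \<Longrightarrow> length (blks k ! i) = 2 * k \<and> wt (blks k ! i) = k"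
  using blks(1)[of k] nth_mem[of i "blks k"] by (auto simp: blkset_def)

fun enc :: "nat \<Rightarrow> cell \<Rightarrow> bool list" where
  "enc k (Mk f) = [f, \<not> f] @ blks k ! 0"
| "enc k (Dg f d) = [f, \<not> f] @ blks k ! Suc d"

lemma blks_pos: "0 < length (blks k)"
  using length_blks[of k] by simp

lemma enc_props:
  assumes "vcell (Bk k) c"
  shows "length (enc k c) = 2 * k + 2 \<and> wt (enc k c) = Suc k"
proof (cases c)
  case (Mk f)
  thus ?thesis using blks_nth[OF blks_pos, of k] by auto
next
  case (Dg f d)
  hence "Suc d < length (blks k)" using assms by (auto simp: Bk_def)
  thus ?thesis using blks_nth[of "Suc d" k] Dg by auto
qed

lemma enc_rails: "enc k c ! 0 = (\<not> enc k c ! 1)"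
  by (cases c) auto

lemma enc_inj:
  assumes "vcell (Bk k) c" "vcell (Bk k) c'" "enc k c = enc k c'"
  shows "c = c'"
proof -
  have L: "0 < length (blks k)" by (rule blks_pos)
  note D = nth_eq_iff_index_eq[OF blks(2)[of k]]
  show ?thesis
  proof (cases c)
    case (Mk f)
    show ?thesis
    proof (cases c')
      case (Mk f') thus ?thesis using assms \<open>c = Mk f\<close> by auto
    next
      case (Dg f' d')
      hence "Suc d' < length (blks k)" using assms by (auto simp: Bk_def)
      thus ?thesis using assms Dg \<open>c = Mk f\<close> D L by auto
    qed
  next
    case (Dg f d)
    hence d: "Suc d < length (blks k)" using assms by (auto simp: Bk_def)
    show ?thesis
    proof (cases c')
      case (Mk f') thus ?thesis using assms Dg d D L by auto
    next
      case (Dg f' d')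
      hence "Suc d' < length (blks k)" using assms by (auto simp: Bk_def)
      thus ?thesis using assms Dg \<open>c = Dg f d\<close> d D by auto
    qed
  qed
qed

lemma enc_antichain:
  assumes "vcell (Bk k) c" "vcell (Bk k) c'"
    and "\<forall>i<2 * k + 2. enc k c ! i \<longrightarrow> enc k c' ! i"
  shows "c = c'"
  using antichain[of "enc k c" "enc k c'"] enc_props[OF assms(1)] enc_props[OF assms(2)] assms enc_inj
  by auto

lemma exists_blk_bit:
  assumes "0 < k" "p < 2 * k"
  shows "\<exists>i<length (blks k). blks k ! i ! p"
proof -
  define w where "w = (if p < k then replicate k True @ replicate k False else replicate k False @ replicate k True)"
  have "w \<in> blkset k" by (auto simp: w_def blkset_def wt_def)
  moreover have "w ! p" using assms by (auto simp: w_def nth_append)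
  ultimately show ?thesis using blks(1)[of k] by (metis in_set_conv_nth)
qed



definition UU :: "nat \<Rightarrow> nat" where "UU k = 2 * k + 2"

definition cellsL :: "nat \<Rightarrow> cell list" where
  "cellsL k = [Mk False, Mk True] @ map (Dg False) [0..<Bk k] @ map (Dg True) [0..<Bk k]"

lemma cellsL_mem: "c \<in> set (cellsL k) \<longleftrightarrow> vcell (Bk k) c"
  by (cases c) (auto simp: cellsL_def)

definition pairsL :: "nat \<Rightarrow> (cell \<times> cell) list" where
  "pairsL k = List.product (cellsL k) (cellsL k)"

definition NP :: "nat \<Rightarrow> nat" where "NP k = length (pairsL k)"

definition ones :: "bool list \<Rightarrow> nat list" where
  "ones w = filter (\<lambda>r. w ! r) [0..<length w]"

definition lits :: "nat \<Rightarrow> cell \<times> cell \<Rightarrow> (nat \<times> nat) list" where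
  "lits k p = map (\<lambda>r. (1, r)) (ones (enc k (fst p))) @ map (\<lambda>r. (0, r)) (ones (enc k (snd p)))"

definition okp :: "nat \<Rightarrow> nat \<Rightarrow> cell \<times> cell \<Rightarrow> bool" where
  "okp k q p = (p \<in> set (pairsL k) \<and> enc k (Mc (Bk k) (fst p) (snd p)) ! q \<and> enc k (fst p) ! 0)"

definition Pstar :: "nat \<Rightarrow> nat \<Rightarrow> cell \<times> cell" where
  "Pstar k q = (SOME p. okp k q p)"

definition pairq :: "nat \<Rightarrow> nat \<Rightarrow> nat \<Rightarrow> cell \<times> cell" where
  "pairq k q \<tau> = (if \<tau> = 0 then Pstar k q else
     (if enc k (Mc (Bk k) (fst (pairsL k ! (\<tau> - 1))) (snd (pairsL k ! (\<tau> - 1)))) ! q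
      then pairsL k ! (\<tau> - 1) else Pstar k q))"

definition lit :: "nat \<Rightarrow> nat \<Rightarrow> nat \<Rightarrow> nat \<Rightarrow> nat \<times> nat" where
  "lit k q \<tau> i = lits k (pairq k q \<tau>) ! i"

definition L0 :: "nat \<Rightarrow> nat" where "L0 k = NP k + UU k + 1"
definition lam :: "nat \<Rightarrow> nat \<Rightarrow> nat \<Rightarrow> nat" where "lam k \<tau> i = NP k - \<tau> + UU k - i + 1"
definition iota :: "nat \<Rightarrow> nat \<Rightarrow> nat \<Rightarrow> nat \<Rightarrow> nat" where
  "iota k q \<tau> i = (q * Suc (NP k) + \<tau>) * UU k + i"
definition NL :: "nat \<Rightarrow> nat" where "NL k = UU k * Suc (NP k) * UU k"
definition cl :: "nat \<Rightarrow> nat \<Rightarrow> nat \<Rightarrow> nat \<Rightarrow> nat" where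
  "cl k q \<tau> i = fst (lit k q \<tau> i) + L0 k + 1 + iota k q \<tau> i - lam k \<tau> i"
definition Cmax :: "nat \<Rightarrow> nat" where "Cmax k = L0 k + NL k + 2"

definition RR :: "nat \<Rightarrow> nat \<Rightarrow> nat" where "RR k m = m - L0 k"
definition jl :: "nat \<Rightarrow> nat \<Rightarrow> nat \<Rightarrow> nat \<Rightarrow> nat \<Rightarrow> nat" where
  "jl k m q \<tau> i = RR k m - 1 - iota k q \<tau> i"

datatype nm = Rg nat nat | Ch nat nat nat nat | An nat nat nat | Ob nat nat | Fc nat

fun GG :: "nat \<Rightarrow> nat \<Rightarrow> nm \<Rightarrow> nm gate" where
  "GG k m (Rg q j) = (if j = 0 then GC (Ob q (NP k)) else GC (Rg q (j - 1)))"
| "GG k m (Ch q \<tau> i d) = (if d \<le> 1 then GC (Rg (snd (lit k q \<tau> i)) (jl k m q \<tau> i))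
     else GC (Ch q \<tau> i (d - 1)))"
| "GG k m (An q \<tau> i) = (if i = 0 then GC (Ch q \<tau> 0 (cl k q \<tau> 0))
     else GA (An q \<tau> (i - 1)) (Ch q \<tau> i (cl k q \<tau> i)))"
| "GG k m (Ob q \<tau>) = (if \<tau> = 0 then (if q = 0 then GO (An 0 0 (UU k - 1)) (Fc (UU k - 2))
       else GC (An q 0 (UU k - 1)))
     else GO (Ob q (\<tau> - 1)) (An q \<tau> (UU k - 1)))"
| "GG k m (Fc i) = (if i = 0 then GA (Rg 0 (RR k m - 1)) (Rg 1 (RR k m - 1))
     else GA (Fc (i - 1)) (Rg (Suc i) (RR k m - 1)))"

definition tri :: "nat \<Rightarrow> (nat \<times> nat \<times> nat) list" where
  "tri k = List.product [0..<UU k] (List.product [0..<Suc (NP k)] [0..<UU k])"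

definition restL :: "nat \<Rightarrow> nm list" where
  "restL k =
     map (\<lambda>(q, \<tau>, i, d). Ch q \<tau> i d)
       (filter (\<lambda>(q, \<tau>, i, d). 1 \<le> d \<and> d \<le> cl k q \<tau> i)
         (List.product [0..<UU k] (List.product [0..<Suc (NP k)] (List.product [0..<UU k] [0..<Suc (Cmax k)]))))
   @ map (\<lambda>(q, \<tau>, i). An q \<tau> i) (tri k)
   @ map (\<lambda>(q, \<tau>). Ob q \<tau>) (List.product [0..<UU k] [0..<Suc (NP k)])
   @ map Fc [0..<UU k - 1]"

definition nodesL :: "nat \<Rightarrow> nat \<Rightarrow> nm list" where
  "nodesL k m = map (\<lambda>(q, j). Rg q j) (List.product [0..<UU k] [0..<RR k m]) @ restL k"

lemma length_nodesL: "length (nodesL k m) = UU k * RR k m + length (restL k)"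
  by (simp add: nodesL_def)



lemma length_ones: "length (ones w) = wt w"
  unfolding ones_def wt_card by (simp add: length_filter_conv_card cong: conj_cong)

lemma set_ones: "set (ones w) = {r. r < length w \<and> w ! r}"
  unfolding ones_def by auto

lemma Bk_ge: "2 \<le> k \<Longrightarrow> 3 \<le> Bk k"
proof -
  assume k: "2 \<le> k"
  have "(2 * k) choose 1 \<le> (2 * k) choose k" by (rule binomial_maximum')
  hence "2 * k \<le> (2 * k) choose k" by simp
  thus ?thesis using k length_blks[of k] by (simp add: Bk_def)
qed

locale C =
  fixes k m :: nat
  assumes k2: "2 \<le> k" and mbig: "L0 k + NL k + 1 \<le> m"
begin

abbreviation "U \<equiv> UU k"
abbreviation "N \<equiv> NP k"
abbreviation "R \<equiv> RR k m"
abbreviation "B \<equiv> Bk k"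

lemma U6: "6 \<le> U" using k2 by (simp add: UU_def)
lemma B3: "3 \<le> B" using Bk_ge[OF k2] .

lemma iota_lt: "q < U \<Longrightarrow> \<tau> \<le> N \<Longrightarrow> i < U \<Longrightarrow> iota k q \<tau> i < NL k"
proof -
  assume a: "q < U" "\<tau> \<le> N" "i < U"
  have "q * Suc N + \<tau> < U * Suc N"
  proof -
    have "q * Suc N + \<tau> < q * Suc N + Suc N" using a by simp
    also have "\<dots> = Suc q * Suc N" by simp
    also have "\<dots> \<le> U * Suc N" using a by (intro mult_right_mono) auto
    finally show ?thesis .
  qed
  hence "Suc (q * Suc N + \<tau>) \<le> U * Suc N" by simp
  hence "Suc (q * Suc N + \<tau>) * U \<le> U * Suc N * U" by (rule mult_right_mono) simp
  moreover have "iota k q \<tau> i < Suc (q * Suc N + \<tau>) * U" using a by (simp add: iota_def)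
  ultimately show ?thesis by (simp add: NL_def)
qed

lemma R_big: "NL k + 1 \<le> R" using mbig by (simp add: RR_def)

lemma lam_le: "lam k \<tau> i \<le> L0 k" by (simp add: lam_def L0_def)

lemma pairsL_valid: "p \<in> set (pairsL k) \<Longrightarrow> vcell B (fst p) \<and> vcell B (snd p)"
  by (auto simp: pairsL_def cellsL_mem)

lemma lits_len: "p \<in> set (pairsL k) \<Longrightarrow> length (lits k p) = U"
  using pairsL_valid enc_props by (auto simp: lits_def length_ones UU_def)

lemma lits_set: "p \<in> set (pairsL k) \<Longrightarrow> x \<in> set (lits k p) \<Longrightarrow> fst x \<le> 1 \<and> snd x < U"
  using pairsL_valid enc_props by (auto simp: lits_def set_ones UU_def)

lemma okp_ex: "q < U \<Longrightarrow> \<exists>p. okp k q p"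
proof -
  assume q: "q < U"
  have v: "vcell B (Mk b)" "vcell B (Dg b 0)" for b using B3 by auto
  show ?thesis
  proof (cases "q = 0")
    case True
    have "okp k q (Mk True, Mk False)"
      unfolding okp_def pairsL_def using True by (simp add: cellsL_mem)
    thus ?thesis by blast
  next
    case q0: False
    show ?thesis
    proof (cases "q = 1")
      case True
      have "okp k q (Dg True 0, Mk False)"
        unfolding okp_def pairsL_def using True B3 by (simp add: cellsL_mem)
      thus ?thesis by blast
    next
      case False
      hence q2: "q - 2 < 2 * k" using q q0 by (simp add: UU_def)
      obtain i where i: "i < length (blks k)" "blks k ! i ! (q - 2)"
        using exists_blk_bit[OF _ q2] k2 by auto
      have qq: "q = Suc (Suc (q - 2))" using q0 False by simp
      show ?thesis
      proof (cases i)
        case 0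
        have "okp k q (Mk True, Mk False)"
          unfolding okp_def pairsL_def using i 0 by (subst qq) (simp add: cellsL_mem)
        thus ?thesis by blast
      next
        case (Suc d)
        hence d: "d < B" using i by (simp add: Bk_def)
        have "okp k q (Mk True, Dg False d)"
          unfolding okp_def pairsL_def using i Suc d by (subst qq) (simp add: cellsL_mem)
        thus ?thesis by blast
      qed
    qed
  qed
qed

lemma Pstar: "q < U \<Longrightarrow> okp k q (Pstar k q)"
  unfolding Pstar_def using okp_ex someI_ex by metis

lemma pairq: "q < U \<Longrightarrow> \<tau> \<le> N \<Longrightarrow> pairq k q \<tau> \<in> set (pairsL k) \<and> enc k (Mc B (fst (pairq k q \<tau>)) (snd (pairq k q \<tau>))) ! q"
  using Pstar by (auto simp: pairq_def okp_def NP_def)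

lemma lit_props: "q < U \<Longrightarrow> \<tau> \<le> N \<Longrightarrow> i < U \<Longrightarrow> fst (lit k q \<tau> i) \<le> 1 \<and> snd (lit k q \<tau> i) < U"
  using pairq lits_len lits_set unfolding lit_def by (metis nth_mem)

lemma lit_000: "q < U \<Longrightarrow> lit k q 0 0 = (1, 0)"
proof -
  assume q: "q < U"
  have ok: "okp k q (Pstar k q)" using Pstar[OF q] .
  let ?w = "enc k (fst (Pstar k q))"
  have w0: "?w ! 0" using ok by (simp add: okp_def)
  have "[0..<length ?w] = 0 # [1..<length ?w]"
    using enc_props pairsL_valid ok by (simp add: okp_def upt_rec)
  hence "ones ?w = 0 # filter (\<lambda>r. ?w ! r) [1..<length ?w]" using w0 by (simp add: ones_def)
  thus ?thesis by (simp add: lit_def pairq_def lits_def)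
qed

lemma cl_bounds: "q < U \<Longrightarrow> \<tau> \<le> N \<Longrightarrow> i < U \<Longrightarrow> 1 \<le> cl k q \<tau> i \<and> cl k q \<tau> i \<le> Cmax k"
  using lam_le[of \<tau> i] lit_props[of q \<tau> i] iota_lt[of q \<tau> i] by (auto simp: cl_def Cmax_def)

lemma jl_lt: "q < U \<Longrightarrow> \<tau> \<le> N \<Longrightarrow> i < U \<Longrightarrow> jl k m q \<tau> i < R"
  using R_big by (simp add: jl_def)

lemma timing: "q < U \<Longrightarrow> \<tau> \<le> N \<Longrightarrow> i < U \<Longrightarrow>
  cl k q \<tau> i + 1 + jl k m q \<tau> i + lam k \<tau> i = Suc m + fst (lit k q \<tau> i)"
  using lam_le[of \<tau> i] iota_lt[of q \<tau> i] R_big mbig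
  by (simp add: cl_def jl_def RR_def)

fun inr :: "nm \<Rightarrow> bool" where
  "inr (Rg q j) = (q < U \<and> j < R)"
| "inr (Ch q \<tau> i d) = (q < U \<and> \<tau> \<le> N \<and> i < U \<and> 1 \<le> d \<and> d \<le> cl k q \<tau> i)"
| "inr (An q \<tau> i) = (q < U \<and> \<tau> \<le> N \<and> i < U)"
| "inr (Ob q \<tau>) = (q < U \<and> \<tau> \<le> N)"
| "inr (Fc i) = (i < U - 1)"

lemma map_memI: "x \<in> set xs \<Longrightarrow> f x = v \<Longrightarrow> v \<in> set (map f xs)"
  by auto

lemma mem_nodes: "v \<in> set (nodesL k m) \<longleftrightarrow> inr v"
proof
  assume "v \<in> set (nodesL k m)" thus "inr v"
    by (auto simp: nodesL_def restL_def tri_def less_Suc_eq_le)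
next
  assume iv: "inr v"
  show "v \<in> set (nodesL k m)"
  proof (cases v)
    case (Rg q j)
    thus ?thesis unfolding nodesL_def set_append
      by (intro UnI1 map_memI[where x="(q, j)"]) (use iv in auto)
  next
    case (Ch q \<tau> i d)
    thus ?thesis unfolding nodesL_def restL_def set_append
      by (intro UnI2 UnI1 map_memI[where x="(q, \<tau>, i, d)"]) (use iv cl_bounds[of q \<tau> i] in auto)
  next
    case (An q \<tau> i)
    thus ?thesis unfolding nodesL_def restL_def set_append tri_def
      by (intro UnI2 UnI1 map_memI[where x="(q, \<tau>, i)"]) (use iv in auto)
  next
    case (Ob q \<tau>)
    thus ?thesis unfolding nodesL_def restL_def set_append
      by (intro UnI2 UnI1 map_memI[where x="(q, \<tau>)"]) (use iv in auto)
  next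
    case (Fc i)
    thus ?thesis unfolding nodesL_def restL_def set_append
      by (intro UnI2 map_memI[where x="i"]) (use iv in auto)
  qed
qed

lemma distinct_nodes: "distinct (nodesL k m)"
  unfolding nodesL_def restL_def tri_def
  by (auto simp: distinct_map inj_on_def distinct_product)

end


context C begin

lemma closed_inr: "inr v \<Longrightarrow> w \<in> set (gins (GG k m v)) \<Longrightarrow> inr w"
proof (cases v)
  case (Rg q j)
  assume "inr v" "w \<in> set (gins (GG k m v))"
  thus ?thesis using Rg by (cases "j = 0") auto
next
  case (Ch q \<tau> i d)
  assume a: "inr v" "w \<in> set (gins (GG k m v))"
  thus ?thesis using Ch lit_props[of q \<tau> i] jl_lt[of q \<tau> i] by (cases "d \<le> 1") auto
next
  case (An q \<tau> i)
  assume a: "inr v" "w \<in> set (gins (GG k m v))"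
  thus ?thesis using An cl_bounds[of q \<tau> i] cl_bounds[of q \<tau> 0] by (cases "i = 0") auto
next
  case (Ob q \<tau>)
  assume a: "inr v" "w \<in> set (gins (GG k m v))"
  thus ?thesis using Ob U6 by (cases "\<tau> = 0"; cases "q = 0") auto
next
  case (Fc i)
  assume a: "inr v" "w \<in> set (gins (GG k m v))"
  thus ?thesis using Fc U6 R_big by (cases "i = 0") auto
qed

lemma proper: "gproper (GG k m v)"
  by (cases v) auto

lemma decode:
  assumes "\<tau> < Suc N" "i < U"
  shows "iota k q \<tau> i mod U = i \<and> iota k q \<tau> i div U mod Suc N = \<tau> \<and> iota k q \<tau> i div U div Suc N = q"
proof -
  have U0: "0 < U" using U6 by simp
  have d: "iota k q \<tau> i div U = q * Suc N + \<tau>"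
    using assms U0 by (simp add: iota_def)
  have e: "(q * Suc N + \<tau>) mod Suc N = \<tau>" "(q * Suc N + \<tau>) div Suc N = q"
    using assms by (simp_all add: mod_mult_self3 div_mult_self3[of "Suc N"] del: mult_Suc_right)
  have f: "iota k q \<tau> i mod U = i" using assms U0 by (simp add: iota_def)
  show ?thesis using d e f by simp
qed

fun cbound :: "nm \<Rightarrow> nm set" where
  "cbound (Rg q j) = {if j = R - 1 then Fc (q - 1) else Rg q (Suc j),
     Ch ((R - 1 - j) div U div Suc N) ((R - 1 - j) div U mod Suc N) ((R - 1 - j) mod U) 1}"
| "cbound (Ch q \<tau> i d) = {Ch q \<tau> i (Suc d), An q \<tau> i}"
| "cbound (An q \<tau> i) = {An q \<tau> (Suc i), Ob q \<tau>}"
| "cbound (Ob q \<tau>) = {Ob q (Suc \<tau>), Rg q 0}"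
| "cbound (Fc i) = {Fc (Suc i), Ob 0 0}"

lemma cbound_card: "card (cbound w) \<le> 2"
  by (cases w) (auto simp: card_insert_if)

lemma consumer: "inr v \<Longrightarrow> w \<in> set (gins (GG k m v)) \<Longrightarrow> v \<in> cbound w"
proof (cases v)
  case (Rg q j)
  assume "inr v" "w \<in> set (gins (GG k m v))"
  thus ?thesis using Rg by (cases "j = 0") auto
next
  case (Ch q \<tau> i d)
  assume a: "inr v" "w \<in> set (gins (GG k m v))"
  show ?thesis
  proof (cases "d \<le> 1")
    case True
    hence d1: "d = 1" using a Ch by simp
    have io: "iota k q \<tau> i < NL k" using a Ch iota_lt by simp
    have "R - 1 - jl k m q \<tau> i = iota k q \<tau> i" using io R_big by (simp add: jl_def)
    thus ?thesis using a Ch True d1 decode[of \<tau> i q] by auto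
  next
    case False thus ?thesis using a Ch by auto
  qed
next
  case (An q \<tau> i)
  assume a: "inr v" "w \<in> set (gins (GG k m v))"
  thus ?thesis using An by (cases "i = 0") auto
next
  case (Ob q \<tau>)
  assume a: "inr v" "w \<in> set (gins (GG k m v))"
  thus ?thesis using Ob by (cases "\<tau> = 0"; cases "q = 0") auto
next
  case (Fc i)
  assume a: "inr v" "w \<in> set (gins (GG k m v))"
  thus ?thesis using Fc by (cases "i = 0") auto
qed

sublocale G: gnet "nodesL k m" "GG k m"
  by unfold_locales (auto simp: distinct_nodes mem_nodes intro: closed_inr)

lemma cons_card: "card {v \<in> set (nodesL k m). w \<in> set (gins (GG k m v))} \<le> 2"
proof -
  have "{v \<in> set (nodesL k m). w \<in> set (gins (GG k m v))} \<subseteq> cbound w"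
    using consumer mem_nodes by auto
  hence "card {v \<in> set (nodesL k m). w \<in> set (gins (GG k m v))} \<le> card (cbound w)"
    by (intro card_mono) (cases w; auto)
  thus ?thesis using cbound_card by (rule order.trans)
qed

lemma biq: "bi_quadratic (length (nodesL k m)) G.net"
  using G.biq cons_card by blast

end


context C begin

definition Yb :: "nat \<Rightarrow> nat \<Rightarrow> bool" where "Yb u q = enc k (Wc B m u) ! q"
definition HH :: nat where "HH = m + Cmax k + 2"
definition litval :: "nat \<times> nat \<Rightarrow> nat \<Rightarrow> bool" where
  "litval x u = Yb (u - Suc m - fst x) (snd x)"
definition termval :: "nat \<Rightarrow> nat \<Rightarrow> nat \<Rightarrow> nat \<Rightarrow> bool" where
  "termval q \<tau> i u = (\<forall>i'\<le>i. litval (lit k q \<tau> i') u)"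
definition orval :: "nat \<Rightarrow> nat \<Rightarrow> nat \<Rightarrow> bool" where
  "orval q \<tau> u = (\<exists>\<tau>'\<le>\<tau>. termval q \<tau>' (U - 1) u)"
definition leadA :: "nat \<Rightarrow> nat \<Rightarrow> nat" where "leadA \<tau> i = N - \<tau> + U - i"
definition leadO :: "nat \<Rightarrow> nat" where "leadO \<tau> = N - \<tau>"

fun sem :: "nm \<Rightarrow> nat \<Rightarrow> bool" where
  "sem (Rg q j) t = Yb (t + HH - 1 - j) q"
| "sem (Ch q \<tau> i d) t = Yb (t + HH - d - 1 - jl k m q \<tau> i) (snd (lit k q \<tau> i))"
| "sem (An q \<tau> i) t = termval q \<tau> i (t + HH + leadA \<tau> i)"
| "sem (Ob q \<tau>) t = orval q \<tau> (t + HH + leadO \<tau>)"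
| "sem (Fc i) t = False"

lemma Wc_valid': "vcell B (Wc B m u)"
  using Wc_valid B3 by simp

lemma term_iff:
  assumes q: "q < U" and \<tau>: "\<tau> \<le> N" and u: "m + 2 \<le> u"
  shows "termval q \<tau> (U - 1) u \<longleftrightarrow> pairq k q \<tau> = (Wc B m (u - m - 2), Wc B m (u - m - 1))"
proof -
  define p where "p = pairq k q \<tau>"
  have pm: "p \<in> set (pairsL k)" using pairq[OF q \<tau>] by (simp add: p_def)
  have len: "length (lits k p) = U" using lits_len[OF pm] .
  have U0: "0 < U" using U6 by simp
  have "termval q \<tau> (U - 1) u \<longleftrightarrow> (\<forall>x\<in>set (lits k p). litval x u)"
  proof -
    have "\<forall>i'. (i' \<le> U - 1) = (i' < length (lits k p))" using U0 len by auto
    hence "termval q \<tau> (U - 1) u \<longleftrightarrow> (\<forall>i'<length (lits k p). litval (lits k p ! i') u)"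
      unfolding termval_def lit_def p_def[symmetric] by simp
    thus ?thesis by (simp only: all_set_conv_all_nth)
  qed
  also have "\<dots> \<longleftrightarrow> (\<forall>r<U. enc k (fst p) ! r \<longrightarrow> enc k (Wc B m (u - m - 2)) ! r) \<and>
                    (\<forall>r<U. enc k (snd p) ! r \<longrightarrow> enc k (Wc B m (u - m - 1)) ! r)"
  proof -
    have l1: "length (enc k (fst p)) = U" "length (enc k (snd p)) = U"
      using enc_props pairsL_valid[OF pm] by (auto simp: UU_def)
    have e1: "u - Suc m - 1 = u - m - 2" "u - Suc m - 0 = u - m - 1" by auto
    show ?thesis unfolding lits_def litval_def Yb_def set_append ball_Un set_map ball_simps set_ones
      by (simp add: l1 e1 imp_conjL)
  qed
  also have "\<dots> \<longleftrightarrow> p = (Wc B m (u - m - 2), Wc B m (u - m - 1))"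
  proof
    assume h: "(\<forall>r<U. enc k (fst p) ! r \<longrightarrow> enc k (Wc B m (u - m - 2)) ! r) \<and>
                    (\<forall>r<U. enc k (snd p) ! r \<longrightarrow> enc k (Wc B m (u - m - 1)) ! r)"
    have "fst p = Wc B m (u - m - 2)"
      using h pairsL_valid[OF pm] Wc_valid' by (intro enc_antichain[of k]) (auto simp: UU_def)
    moreover have "snd p = Wc B m (u - m - 1)"
      using h pairsL_valid[OF pm] Wc_valid' by (intro enc_antichain[of k]) (auto simp: UU_def)
    ultimately show "p = (Wc B m (u - m - 2), Wc B m (u - m - 1))" by (simp add: prod_eq_iff)
  qed auto
  finally show ?thesis by (simp add: p_def)
qed

lemma dnf:
  assumes q: "q < U" and u: "m + 2 \<le> u"
  shows "orval q N u = Yb u q"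
proof -
  let ?p = "Wc B m (u - m - 2)" and ?c = "Wc B m (u - m - 1)"
  have Y: "Yb u q = enc k (Mc B ?p ?c) ! q" unfolding Yb_def using Wc_rec[OF u] by simp
  have "orval q N u \<longleftrightarrow> (\<exists>\<tau>\<le>N. pairq k q \<tau> = (?p, ?c))"
    unfolding orval_def using term_iff[OF q _ u] by auto
  also have "\<dots> \<longleftrightarrow> enc k (Mc B ?p ?c) ! q"
  proof
    assume "\<exists>\<tau>\<le>N. pairq k q \<tau> = (?p, ?c)"
    then obtain \<tau> where "\<tau> \<le> N" "pairq k q \<tau> = (?p, ?c)" by blast
    thus "enc k (Mc B ?p ?c) ! q" using pairq[OF q, of \<tau>] by simp
  next
    assume e: "enc k (Mc B ?p ?c) ! q"
    have "(?p, ?c) \<in> set (pairsL k)" using Wc_valid' by (simp add: pairsL_def cellsL_mem)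
    then obtain j where j: "j < N" "pairsL k ! j = (?p, ?c)" by (auto simp: in_set_conv_nth NP_def)
    have "pairq k q (Suc j) = (?p, ?c)" using j e by (simp add: pairq_def)
    thus "\<exists>\<tau>\<le>N. pairq k q \<tau> = (?p, ?c)" using j by (intro exI[of _ "Suc j"]) auto
  qed
  finally show ?thesis using Y by simp
qed

lemma HH_big: "m + Cmax k + 2 \<le> HH" by (simp add: HH_def)

lemma R_le: "R \<le> m" by (simp add: RR_def)

lemma step: "inr v \<Longrightarrow> geval (\<lambda>w. sem w t) (GG k m v) = sem v (Suc t)"
proof (cases v)
  case (Rg q j)
  assume iv: "inr v"
  hence qj: "q < U" "j < R" using Rg by auto
  show ?thesis
  proof (cases "j = 0")
    case True
    have "m + 2 \<le> t + HH" using HH_big by simp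
    thus ?thesis using Rg True dnf[OF qj(1)] by (simp add: leadO_def)
  next
    case False
    have "Suc t + HH - 1 - j = t + HH - 1 - (j - 1)" using False qj R_le HH_big by simp
    thus ?thesis using Rg False by simp
  qed
next
  case (Ch q \<tau> i d)
  assume iv: "inr v"
  hence a: "q < U" "\<tau> \<le> N" "i < U" "1 \<le> d" "d \<le> cl k q \<tau> i" using Ch by auto
  have jl: "jl k m q \<tau> i < R" using jl_lt a by simp
  have cb: "cl k q \<tau> i \<le> Cmax k" using cl_bounds a by simp
  show ?thesis
  proof (cases "d \<le> 1")
    case True
    hence "d = 1" using a by simp
    thus ?thesis using Ch by simp
  next
    case False
    have "t + HH - (d - 1) - 1 - jl k m q \<tau> i = Suc t + HH - d - 1 - jl k m q \<tau> i"
      using False a jl cb R_le HH_big by simp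
    thus ?thesis using Ch False by simp
  qed
next
  case (An q \<tau> i)
  assume iv: "inr v"
  hence a: "q < U" "\<tau> \<le> N" "i < U" using An by auto
  have leaf: "sem (Ch q \<tau> i (cl k q \<tau> i)) t = litval (lit k q \<tau> i) (Suc t + HH + leadA \<tau> i)"
  proof -
    have T: "cl k q \<tau> i + 1 + jl k m q \<tau> i + lam k \<tau> i = Suc m + fst (lit k q \<tau> i)"
      using timing a by simp
    have jl: "jl k m q \<tau> i < R" using jl_lt a by simp
    have cb: "cl k q \<tau> i \<le> Cmax k" using cl_bounds a by simp
    have lA: "lam k \<tau> i = Suc (leadA \<tau> i)" using a by (simp add: lam_def leadA_def)
    have "t + HH - cl k q \<tau> i - 1 - jl k m q \<tau> i = Suc t + HH + leadA \<tau> i - Suc m - fst (lit k q \<tau> i)"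
      using T lA jl cb R_le HH_big by simp
    thus ?thesis by (simp add: litval_def)
  qed
  show ?thesis
  proof (cases "i = 0")
    case True
    thus ?thesis using An leaf by (simp add: termval_def)
  next
    case False
    have l: "leadA \<tau> (i - 1) = Suc (leadA \<tau> i)" using False a by (simp add: leadA_def)
    have tv: "termval q \<tau> i x = (termval q \<tau> (i - 1) x \<and> litval (lit k q \<tau> i) x)" for x
      using False by (cases i) (auto simp: termval_def le_Suc_eq)
    show ?thesis using An False leaf l tv by simp
  qed
next
  case (Ob q \<tau>)
  assume iv: "inr v"
  hence a: "q < U" "\<tau> \<le> N" using Ob by auto
  have U0: "0 < U" using U6 by simp
  have lA: "leadA \<tau> (U - 1) = Suc (leadO \<tau>)" using a U0 by (simp add: leadA_def leadO_def)
  show ?thesis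
  proof (cases "\<tau> = 0")
    case True
    have ov: "orval q 0 x = termval q 0 (U - 1) x" for x by (simp add: orval_def)
    show ?thesis using Ob True lA ov by (cases "q = 0") auto
  next
    case False
    have lO: "leadO (\<tau> - 1) = Suc (leadO \<tau>)" using False a by (simp add: leadO_def)
    have ov: "orval q \<tau> x = (orval q (\<tau> - 1) x \<or> termval q \<tau> (U - 1) x)" for x
      using False by (cases \<tau>) (auto simp: orval_def le_Suc_eq)
    show ?thesis using Ob False lA lO ov by simp
  qed
next
  case (Fc i)
  show ?thesis
  proof (cases "i = 0")
    case True
    thus ?thesis using Fc enc_rails[of k] by (simp add: Yb_def)
  next
    case False thus ?thesis using Fc by simp
  qed
qed

definition St :: "nat \<Rightarrow> bool list" where "St t = map (\<lambda>v. sem v t) (nodesL k m)"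

lemma St_step: "G.net (St t) = St (Suc t)"
  unfolding St_def by (rule G.sim) (use step mem_nodes in auto)

lemma St_iter: "(G.net ^^ t) (St 0) = St t"
  by (induction t) (auto simp: St_step)

end


context C begin

abbreviation reach :: "nm \<Rightarrow> nm \<Rightarrow> bool" where
  "reach a b \<equiv> (G.ix a, G.ix b) \<in> G.E\<^sup>*"

lemma ed: "inr v \<Longrightarrow> w \<in> set (gins (GG k m v)) \<Longrightarrow> reach w v"
  using G.edge[of v w] mem_nodes proper by auto

lemma tr: "reach a b \<Longrightarrow> reach b c \<Longrightarrow> reach a c"
  by (rule rtrancl_trans)

lemma ring_fwd: "q < U \<Longrightarrow> j' < R \<Longrightarrow> j \<le> j' \<Longrightarrow> reach (Rg q j) (Rg q j')"
proof (induction j' rule: nat_induct)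
  case 0 thus ?case by simp
next
  case (Suc n)
  show ?case
  proof (cases "j = Suc n")
    case True thus ?thesis by simp
  next
    case False
    hence "reach (Rg q j) (Rg q n)" using Suc by simp
    moreover have "reach (Rg q n) (Rg q (Suc n))" using Suc by (intro ed) auto
    ultimately show ?thesis by (rule tr)
  qed
qed

lemma fc_fwd: "i' < U - 1 \<Longrightarrow> i \<le> i' \<Longrightarrow> reach (Fc i) (Fc i')"
proof (induction i' rule: nat_induct)
  case 0 thus ?case by simp
next
  case (Suc n)
  show ?case
  proof (cases "i = Suc n")
    case True thus ?thesis by simp
  next
    case False
    hence "reach (Fc i) (Fc n)" using Suc by simp
    moreover have "reach (Fc n) (Fc (Suc n))" using Suc by (intro ed) auto
    ultimately show ?thesis by (rule tr)
  qed
qed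

lemma ob_fwd: "q < U \<Longrightarrow> \<tau>' \<le> N \<Longrightarrow> \<tau> \<le> \<tau>' \<Longrightarrow> reach (Ob q \<tau>) (Ob q \<tau>')"
proof (induction \<tau>' rule: nat_induct)
  case 0 thus ?case by simp
next
  case (Suc n)
  show ?case
  proof (cases "\<tau> = Suc n")
    case True thus ?thesis by simp
  next
    case False
    hence "reach (Ob q \<tau>) (Ob q n)" using Suc by simp
    moreover have "reach (Ob q n) (Ob q (Suc n))" using Suc by (intro ed) auto
    ultimately show ?thesis by (rule tr)
  qed
qed

lemma an_fwd: "q < U \<Longrightarrow> \<tau> \<le> N \<Longrightarrow> i' < U \<Longrightarrow> i \<le> i' \<Longrightarrow> reach (An q \<tau> i) (An q \<tau> i')"
proof (induction i' rule: nat_induct)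
  case 0 thus ?case by simp
next
  case (Suc n)
  show ?case
  proof (cases "i = Suc n")
    case True thus ?thesis by simp
  next
    case False
    hence "reach (An q \<tau> i) (An q \<tau> n)" using Suc by simp
    moreover have "reach (An q \<tau> n) (An q \<tau> (Suc n))" using Suc by (intro ed) auto
    ultimately show ?thesis by (rule tr)
  qed
qed

lemma ch_fwd: "q < U \<Longrightarrow> \<tau> \<le> N \<Longrightarrow> i < U \<Longrightarrow> d' \<le> cl k q \<tau> i \<Longrightarrow> 1 \<le> d \<Longrightarrow> d \<le> d' \<Longrightarrow>
   reach (Ch q \<tau> i d) (Ch q \<tau> i d')"
proof (induction d' rule: nat_induct)
  case 0 thus ?case by simp
next
  case (Suc n)
  show ?case
  proof (cases "d = Suc n")
    case True thus ?thesis by simp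
  next
    case False
    hence "reach (Ch q \<tau> i d) (Ch q \<tau> i n)" using Suc by simp
    moreover have "reach (Ch q \<tau> i n) (Ch q \<tau> i (Suc n))" using Suc False by (intro ed) auto
    ultimately show ?thesis by (rule tr)
  qed
qed

lemma ob_ring: "q < U \<Longrightarrow> reach (Ob q N) (Rg q 0)"
  using R_big by (intro ed) auto

lemma an_ob: "q < U \<Longrightarrow> \<tau> \<le> N \<Longrightarrow> reach (An q \<tau> (U - 1)) (Ob q \<tau>)"
proof -
  assume a: "q < U" "\<tau> \<le> N"
  have "An q \<tau> (U - 1) \<in> set (gins (GG k m (Ob q \<tau>)))" by (cases "\<tau> = 0"; cases "q = 0") auto
  thus ?thesis using a by (intro ed) auto
qed

lemma ch_an: "q < U \<Longrightarrow> \<tau> \<le> N \<Longrightarrow> i < U \<Longrightarrow> reach (Ch q \<tau> i (cl k q \<tau> i)) (An q \<tau> i)"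
proof -
  assume a: "q < U" "\<tau> \<le> N" "i < U"
  have "Ch q \<tau> i (cl k q \<tau> i) \<in> set (gins (GG k m (An q \<tau> i)))" by (cases "i = 0") auto
  thus ?thesis using a by (intro ed) auto
qed

lemma ring_ch: "q < U \<Longrightarrow> \<tau> \<le> N \<Longrightarrow> i < U \<Longrightarrow>
   reach (Rg (snd (lit k q \<tau> i)) (jl k m q \<tau> i)) (Ch q \<tau> i 1)"
  using cl_bounds[of q \<tau> i] by (intro ed) auto

lemma fc_ob: "reach (Fc (U - 2)) (Ob 0 0)"
  using U6 by (intro ed) auto

lemma tail_fc: "q < U \<Longrightarrow> reach (Rg q (R - 1)) (Fc (q - 1))"
proof -
  assume a: "q < U"
  have "Rg q (R - 1) \<in> set (gins (GG k m (Fc (q - 1))))"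
  proof (cases "q - 1 = 0")
    case True
    hence "q = 0 \<or> q = 1" by auto
    thus ?thesis using True by auto
  next
    case False
    hence "Suc (q - 1) = q" by simp
    thus ?thesis using False by simp
  qed
  thus ?thesis using a U6 by (intro ed) auto
qed

lemma U0: "0 < U" using U6 by simp

lemma to_hub: "inr v \<Longrightarrow> reach v (Rg 0 0)"
proof -
  have fc_hub: "i < U - 1 \<Longrightarrow> reach (Fc i) (Rg 0 0)" for i
  proof -
    assume i: "i < U - 1"
    have "reach (Fc i) (Fc (U - 2))" using i U6 by (intro fc_fwd) auto
    also have "reach (Fc (U - 2)) (Ob 0 0)" by (rule fc_ob)
    also have "reach (Ob 0 0) (Ob 0 N)" using U6 by (intro ob_fwd) auto
    also have "reach (Ob 0 N) (Rg 0 0)" using U6 by (intro ob_ring) auto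
    finally show ?thesis .
  qed
  have rg_hub: "q < U \<Longrightarrow> j < R \<Longrightarrow> reach (Rg q j) (Rg 0 0)" for q j
  proof -
    assume a: "q < U" "j < R"
    have "reach (Rg q j) (Rg q (R - 1))" using a by (intro ring_fwd) auto
    also have "reach (Rg q (R - 1)) (Fc (q - 1))" using a(1) by (rule tail_fc)
    also have "reach (Fc (q - 1)) (Rg 0 0)" using a U6 by (intro fc_hub) auto
    finally show ?thesis .
  qed
  have ob_hub: "q < U \<Longrightarrow> \<tau> \<le> N \<Longrightarrow> reach (Ob q \<tau>) (Rg 0 0)" for q \<tau>
  proof -
    assume a: "q < U" "\<tau> \<le> N"
    have "reach (Ob q \<tau>) (Ob q N)" using a by (intro ob_fwd) auto
    also have "reach (Ob q N) (Rg q 0)" using a(1) by (rule ob_ring)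
    also have "reach (Rg q 0) (Rg 0 0)" using a R_big by (intro rg_hub) auto
    finally show ?thesis .
  qed
  have an_hub: "q < U \<Longrightarrow> \<tau> \<le> N \<Longrightarrow> i < U \<Longrightarrow> reach (An q \<tau> i) (Rg 0 0)" for q \<tau> i
  proof -
    assume a: "q < U" "\<tau> \<le> N" "i < U"
    have "reach (An q \<tau> i) (An q \<tau> (U - 1))" using a by (intro an_fwd) auto
    also have "reach (An q \<tau> (U - 1)) (Ob q \<tau>)" using a by (intro an_ob)
    also have "reach (Ob q \<tau>) (Rg 0 0)" using a by (intro ob_hub)
    finally show ?thesis .
  qed
  assume iv: "inr v"
  show ?thesis
  proof (cases v)
    case (Rg q j) thus ?thesis using iv rg_hub by simp
  next
    case (Ch q \<tau> i d)
    hence a: "q < U" "\<tau> \<le> N" "i < U" "1 \<le> d" "d \<le> cl k q \<tau> i" using iv by auto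
    have "reach (Ch q \<tau> i d) (Ch q \<tau> i (cl k q \<tau> i))" using a by (intro ch_fwd) auto
    also have "reach (Ch q \<tau> i (cl k q \<tau> i)) (An q \<tau> i)" using a by (intro ch_an)
    also have "reach (An q \<tau> i) (Rg 0 0)" using a by (intro an_hub)
    finally show ?thesis using Ch by simp
  next
    case (An q \<tau> i) thus ?thesis using iv an_hub by simp
  next
    case (Ob q \<tau>) thus ?thesis using iv ob_hub by simp
  next
    case (Fc i) thus ?thesis using iv fc_hub by simp
  qed
qed

lemma from_hub: "inr v \<Longrightarrow> reach (Rg 0 0) v"
proof -
  have R0: "0 < R" using R_big by simp
  have out: "q < U \<Longrightarrow> reach (Rg 0 0) (Rg q 0)" for q
  proof -
    assume q: "q < U"
    have l: "lit k q 0 0 = (1, 0)" using lit_000 q .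
    have cb: "1 \<le> cl k q 0 0" using cl_bounds[of q 0 0] q U0 by simp
    have "reach (Rg 0 0) (Rg 0 (jl k m q 0 0))" using jl_lt[of q 0 0] q U0 by (intro ring_fwd) auto
    also have "reach (Rg 0 (jl k m q 0 0)) (Ch q 0 0 1)" using ring_ch[of q 0 0] q U0 l by simp
    also have "reach (Ch q 0 0 1) (Ch q 0 0 (cl k q 0 0))" using q U0 cb by (intro ch_fwd) auto
    also have "reach (Ch q 0 0 (cl k q 0 0)) (An q 0 0)" using q U0 by (intro ch_an) auto
    also have "reach (An q 0 0) (An q 0 (U - 1))" using q U0 by (intro an_fwd) auto
    also have "reach (An q 0 (U - 1)) (Ob q 0)" using q by (intro an_ob) auto
    also have "reach (Ob q 0) (Ob q N)" using q by (intro ob_fwd) auto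
    also have "reach (Ob q N) (Rg q 0)" using q by (rule ob_ring)
    finally show ?thesis .
  qed
  have rg: "q < U \<Longrightarrow> j < R \<Longrightarrow> reach (Rg 0 0) (Rg q j)" for q j
    using out ring_fwd[of q j 0] tr by blast
  assume iv: "inr v"
  show ?thesis
  proof (cases v)
    case (Rg q j) thus ?thesis using iv rg by simp
  next
    case (Ch q \<tau> i d)
    hence a: "q < U" "\<tau> \<le> N" "i < U" "1 \<le> d" "d \<le> cl k q \<tau> i" using iv by auto
    have "reach (Rg 0 0) (Rg (snd (lit k q \<tau> i)) (jl k m q \<tau> i))"
      using a lit_props[of q \<tau> i] jl_lt[of q \<tau> i] by (intro rg) auto
    also have "reach (Rg (snd (lit k q \<tau> i)) (jl k m q \<tau> i)) (Ch q \<tau> i 1)" using a by (intro ring_ch)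
    also have "reach (Ch q \<tau> i 1) (Ch q \<tau> i d)" using a by (intro ch_fwd) auto
    finally show ?thesis using Ch by simp
  next
    case (An q \<tau> i)
    hence a: "q < U" "\<tau> \<le> N" "i < U" using iv by auto
    have cb: "1 \<le> cl k q \<tau> i" using cl_bounds a by simp
    have "reach (Rg 0 0) (Rg (snd (lit k q \<tau> i)) (jl k m q \<tau> i))"
      using a lit_props[of q \<tau> i] jl_lt[of q \<tau> i] by (intro rg) auto
    also have "reach (Rg (snd (lit k q \<tau> i)) (jl k m q \<tau> i)) (Ch q \<tau> i 1)" using a by (intro ring_ch)
    also have "reach (Ch q \<tau> i 1) (Ch q \<tau> i (cl k q \<tau> i))" using a cb by (intro ch_fwd) auto
    also have "reach (Ch q \<tau> i (cl k q \<tau> i)) (An q \<tau> i)" using a by (intro ch_an)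
    finally show ?thesis using An by simp
  next
    case (Ob q \<tau>)
    hence a: "q < U" "\<tau> \<le> N" using iv by auto
    have cb: "1 \<le> cl k q \<tau> (U - 1)" using cl_bounds a U0 by simp
    have "reach (Rg 0 0) (Rg (snd (lit k q \<tau> (U - 1))) (jl k m q \<tau> (U - 1)))"
      using a U0 lit_props[of q \<tau> "U - 1"] jl_lt[of q \<tau> "U - 1"] by (intro rg) auto
    also have "reach (Rg (snd (lit k q \<tau> (U - 1))) (jl k m q \<tau> (U - 1))) (Ch q \<tau> (U - 1) 1)"
      using a U0 by (intro ring_ch) auto
    also have "reach (Ch q \<tau> (U - 1) 1) (Ch q \<tau> (U - 1) (cl k q \<tau> (U - 1)))" using a cb U0 by (intro ch_fwd) auto
    also have "reach (Ch q \<tau> (U - 1) (cl k q \<tau> (U - 1))) (An q \<tau> (U - 1))" using a U0 by (intro ch_an) auto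
    also have "reach (An q \<tau> (U - 1)) (Ob q \<tau>)" using a by (intro an_ob)
    finally show ?thesis using Ob by simp
  next
    case (Fc i)
    hence a: "i < U - 1" using iv by auto
    have "reach (Rg 0 0) (Rg 0 (R - 1))" using R0 U0 by (intro rg) auto
    also have "reach (Rg 0 (R - 1)) (Fc 0)" using tail_fc[of 0] U0 by simp
    also have "reach (Fc 0) (Fc i)" using a by (intro fc_fwd) auto
    finally show ?thesis using Fc by simp
  qed
qed

lemma scon: "strongly_connected (length (nodesL k m)) G.net"
  by (rule G.sc[of "Rg 0 0"]) (use mem_nodes to_hub from_hub R_big U0 in auto)

end


context C begin

lemma St_shift: "(G.net ^^ t) (St a) = St (a + t)"
  by (induction t) (auto simp: St_step)

lemma St_states: "St t \<in> states (length (nodesL k m))"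
  by (simp add: St_def states_def)

lemma St_nth: "inr v \<Longrightarrow> St t ! G.ix v = sem v t"
  using G.ix_mem[of v] mem_nodes by (simp add: St_def)

lemma orbit: "\<exists>s p. periodic_orbit (length (nodesL k m)) G.net s p \<and> B ^ m \<le> p"
proof -
  let ?n = "length (nodesL k m)"
  have fin: "finite (states ?n)" unfolding states_def using finite_lists_length_eq[of "UNIV :: bool set"] by simp
  have "\<not> inj St"
  proof
    assume "inj St"
    hence "infinite (range St)" by (simp add: finite_image_iff)
    moreover have "range St \<subseteq> states ?n" using St_states by auto
    ultimately show False using fin finite_subset by blast
  qed
  then obtain t1 t2 where ne: "t1 \<noteq> t2" and eq: "St t1 = St t2" unfolding inj_def by blast
  obtain a b where ab: "a < b" "St a = St b"
    using ne eq by (cases "t1 < t2") (auto intro: that[of t1 t2] that[of t2 t1])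
  define s where "s = St a"
  have ex: "\<exists>p. 0 < p \<and> (G.net ^^ p) s = s"
  proof (intro exI[of _ "b - a"] conjI)
    show "0 < b - a" using ab by simp
    have "(G.net ^^ (b - a)) s = St (a + (b - a))" by (simp only: s_def St_shift)
    also have "\<dots> = s" using ab by (simp add: s_def)
    finally show "(G.net ^^ (b - a)) s = s" .
  qed
  define P where "P = (LEAST p. 0 < p \<and> (G.net ^^ p) s = s)"
  have P: "0 < P" "(G.net ^^ P) s = s" using LeastI_ex[OF ex] by (auto simp: P_def)
  have Pmin: "\<And>p. 0 < p \<Longrightarrow> (G.net ^^ p) s = s \<Longrightarrow> P \<le> p"
    unfolding P_def by (rule Least_le) simp
  have inj: "inj_on (\<lambda>i. (G.net ^^ i) s) {0..<P}"
  proof (rule inj_onI)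
    fix i j assume i: "i \<in> {0..<P}" and j: "j \<in> {0..<P}" and e: "(G.net ^^ i) s = (G.net ^^ j) s"
    show "i = j"
    proof (rule ccontr)
      assume "i \<noteq> j"
      then obtain x y where xy: "x < y" "y < P" "(G.net ^^ x) s = (G.net ^^ y) s"
        using i j e by (cases "i < j") (auto intro: that[of i j] that[of j i])
      have "(G.net ^^ (P - y + x)) s = (G.net ^^ (P - y)) ((G.net ^^ x) s)"
        by (simp add: funpow_add)
      also have "\<dots> = (G.net ^^ (P - y)) ((G.net ^^ y) s)" using xy by simp
      also have "\<dots> = (G.net ^^ (P - y + y)) s" by (simp only: funpow_add o_apply)
      also have "\<dots> = (G.net ^^ P) s" using xy by simp
      also have "\<dots> = s" using P by simp
      finally have "P \<le> P - y + x" using xy by (intro Pmin) auto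
      thus False using xy by simp
    qed
  qed
  have po: "periodic_orbit ?n G.net s P"
    unfolding periodic_orbit_def using P inj St_states by (auto simp: s_def)
  have per: "St (a + P + x) = St (a + x)" for x
  proof -
    have "St (a + P + x) = (G.net ^^ x) ((G.net ^^ P) s)" by (simp add: St_shift s_def)
    also have "\<dots> = St (a + x)" using P by (simp add: St_shift s_def)
    finally show ?thesis .
  qed
  have Wper: "Wc B m (j + P) = Wc B m j" if j: "a + HH - 1 \<le> j" for j
  proof -
    define x where "x = j - (a + HH - 1)"
    have HH1: "1 \<le> HH" by (simp add: HH_def)
    have jx: "j = a + x + HH - 1" using j HH1 by (simp add: x_def)
    have "enc k (Wc B m (j + P)) = enc k (Wc B m j)"
    proof (rule nth_equalityI)
      show "length (enc k (Wc B m (j + P))) = length (enc k (Wc B m j))"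
        using enc_props Wc_valid' by simp
      fix q assume "q < length (enc k (Wc B m (j + P)))"
      hence q: "q < U" using enc_props Wc_valid' by (simp add: UU_def)
      have R0: "0 < R" using R_big by simp
      have "St (a + P + x) ! G.ix (Rg q 0) = St (a + x) ! G.ix (Rg q 0)" using per by simp
      hence "sem (Rg q 0) (a + P + x) = sem (Rg q 0) (a + x)" using St_nth q R0 by simp
      hence "Yb (a + P + x + HH - 1) q = Yb (a + x + HH - 1) q" by simp
      moreover have "a + P + x + HH - 1 = j + P" using jx HH1 by simp
      ultimately show "enc k (Wc B m (j + P)) ! q = enc k (Wc B m j) ! q" using jx by (simp add: Yb_def)
    qed
    thus ?thesis using enc_inj Wc_valid' by blast
  qed
  have "B ^ m \<le> P" using period_bound[of B P "a + HH - 1" m] Wper P B3 by simp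
  thus ?thesis using po by blast
qed

end


lemma choose_k:
  fixes c :: real
  assumes c0: "0 < c" and c2: "c < 2"
  shows "\<exists>k\<ge>2. c ^ (2 * k + 2) < real (Bk k)"
proof -
  define a where "a = c ^ 2"
  define r where "r = a / 4"
  have a0: "0 < a" using c0 by (simp add: a_def)
  have a4: "a < 4"
  proof -
    have "c * c < 2 * 2" using c0 c2 by (intro mult_strict_mono) auto
    thus ?thesis by (simp add: a_def power2_eq_square)
  qed
  have r1: "norm r < 1" using a0 a4 by (simp add: r_def)
  have q1: "norm (1/4 :: real) < 1" by simp
  have lim: "(\<lambda>n. 2 * (of_nat n * (1/4) ^ n) + 2 * a * (of_nat n * r ^ n)) \<longlonglongrightarrow> (2 * 0 + 2 * a * 0 :: real)"
    by (intro tendsto_intros powser_times_n_limit_0 r1 q1)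
  hence "eventually (\<lambda>n. 2 * (of_nat n * (1/4) ^ n) + 2 * a * (of_nat n * r ^ n) < (1::real)) sequentially"
    by (intro order_tendstoD(2)) auto
  then obtain N where N: "\<And>n. N \<le> n \<Longrightarrow> 2 * (of_nat n * (1/4) ^ n) + 2 * a * (of_nat n * r ^ n) < (1::real)"
    unfolding eventually_sequentially by blast
  define k where "k = max N 2"
  have k2: "2 \<le> k" and gk: "2 * (real k * (1/4) ^ k) + 2 * a * (real k * r ^ k) < 1"
    using N[of k] by (auto simp: k_def)
  have p4: "(4::real) ^ k > 0" by simp
  have e1: "(1/4::real) ^ k * 4 ^ k = 1" by (simp add: power_mult_distrib[symmetric])
  have e2: "r ^ k * 4 ^ k = a ^ k" by (simp add: power_mult_distrib[symmetric] r_def)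
  have "(2 * (real k * (1/4) ^ k) + 2 * a * (real k * r ^ k)) * 4 ^ k < 1 * 4 ^ k"
    using gk p4 by (intro mult_strict_right_mono) auto
  hence "2 * real k * ((1/4) ^ k * 4 ^ k) + 2 * a * real k * (r ^ k * 4 ^ k) < 4 ^ k"
    by (simp add: algebra_simps)
  hence ineq: "2 * real k + 2 * real k * (a * a ^ k) < 4 ^ k" unfolding e1 e2 by (simp add: algebra_simps)
  have kpos: "0 < real k" using k2 by simp
  have "4 ^ k / (2 * real k) \<le> real ((2 * k) choose k)"
    using central_binomial_lower_bound[of k] k2 by simp
  moreover have "1 + a * a ^ k < 4 ^ k / (2 * real k)"
  proof -
    have "(1 + a * a ^ k) * (2 * real k) < 4 ^ k" using ineq by (simp add: algebra_simps)
    thus ?thesis using kpos by (simp add: field_simps)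
  qed
  ultimately have "a * a ^ k < real ((2 * k) choose k) - 1" by simp
  moreover have "real (Bk k) = real ((2 * k) choose k) - 1"
  proof -
    have "1 \<le> (2 * k) choose k" by (simp add: Suc_le_eq zero_less_binomial_iff)
    thus ?thesis by (simp add: Bk_def length_blks of_nat_diff)
  qed
  moreover have "c ^ (2 * k + 2) = a * a ^ k"
  proof -
    have "c ^ (2 * k + 2) = (c ^ 2) ^ k * c ^ 2" by (simp only: power_add power_mult)
    thus ?thesis unfolding a_def by (metis mult.commute)
  qed
  ultimately show ?thesis using k2 by auto
qed

theorem theorem1:
  fixes c :: real
  assumes "0 < c" and "c < 2"
  shows "\<forall>N. \<exists>n\<ge>N. \<exists>g :: bool list \<Rightarrow> bool list.
           boolean_network n g \<and> cooperative n g \<and> bi_quadratic n g \<and>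
           strongly_connected n g \<and>
           (\<exists>s p. periodic_orbit n g s p \<and> real p \<ge> c ^ n)"
proof
  fix N0 :: nat
  obtain k where k2: "2 \<le> k" and kB: "c ^ (2 * k + 2) < real (Bk k)"
    using choose_k[OF assms] by blast
  define U where "U = UU k"
  define B where "B = Bk k"
  define C0 where "C0 = length (restL k)"
  have cU: "c ^ U < real B" using kB by (simp add: U_def UU_def B_def)
  have cU0: "0 < c ^ U" using assms by simp
  define \<rho> where "\<rho> = real B / c ^ U"
  have \<rho>1: "1 < \<rho>" using cU cU0 by (simp add: \<rho>_def)
  obtain m1 where m1: "c ^ C0 < \<rho> ^ m1" using real_arch_pow[OF \<rho>1] by blast
  define m where "m = max m1 (N0 + L0 k + NL k + 1)"
  interpret C k m
    using k2 by unfold_locales (auto simp: m_def)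
  define n where "n = length (nodesL k m)"
  have nval: "n = U * (m - L0 k) + C0" by (simp add: n_def length_nodesL U_def RR_def C0_def)
  have U1: "1 \<le> U" by (simp add: U_def UU_def)
  have nN: "N0 \<le> n"
  proof -
    have "N0 \<le> m - L0 k" by (simp add: m_def)
    also have "\<dots> \<le> U * (m - L0 k)" using U1 by simp
    finally show ?thesis using nval by simp
  qed
  obtain s p where po: "periodic_orbit n G.net s p" and pB: "B ^ m \<le> p"
    using orbit unfolding n_def B_def by blast
  have pc: "c ^ n \<le> real p"
  proof (cases "c \<le> 1")
    case True
    have "c ^ n \<le> 1" using True assms by (simp add: power_le_one)
    also have "1 \<le> real (B ^ m)" using B3 by (simp add: B_def)
    also have "\<dots> \<le> real p" using pB by simp
    finally show ?thesis .
  next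
    case False
    hence c1: "1 \<le> c" by simp
    have "n \<le> U * m + C0" using nval by (simp add: diff_le_self)
    hence "c ^ n \<le> c ^ (U * m + C0)" using c1 by (intro power_increasing) auto
    also have "\<dots> = (c ^ U) ^ m * c ^ C0" by (simp add: power_add power_mult)
    also have "\<dots> \<le> (c ^ U) ^ m * \<rho> ^ m"
    proof -
      have "\<rho> ^ m1 \<le> \<rho> ^ m" using \<rho>1 by (intro power_increasing) (auto simp: m_def)
      hence "c ^ C0 \<le> \<rho> ^ m" using m1 by simp
      thus ?thesis using cU0 by (intro mult_left_mono) auto
    qed
    also have "\<dots> = (c ^ U * \<rho>) ^ m" by (simp add: power_mult_distrib)
    also have "\<dots> = real B ^ m"
    proof -
      have "c ^ U * \<rho> = real B" using assms(1) by (simp add: \<rho>_def)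
      thus ?thesis by simp
    qed
    also have "\<dots> \<le> real p" using pB by (metis of_nat_le_iff of_nat_power)
    finally show ?thesis .
  qed
  show "\<exists>n\<ge>N0. \<exists>g :: bool list \<Rightarrow> bool list.
           boolean_network n g \<and> cooperative n g \<and> bi_quadratic n g \<and>
           strongly_connected n g \<and>
           (\<exists>s p. periodic_orbit n g s p \<and> real p \<ge> c ^ n)"
    using nN G.bn G.coop biq scon po pc unfolding n_def by blast
qed


end
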